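(* Let $\mathcal X\subset\mathbb R^d$ be a finite set with Euclidean distance $d$, and let $C=\{C_1,\dots,C_k\}$ be a center-based clustering of $\mathcal X$ satisfying the $\gamma$-margin property, where the center $\mu_i$ of $C_i$ is its center of mass $\frac1{|C_i|}\sum_{x\in C_i}x$. Assume $\delta\in(0,1)$ and $\gamma>1$. Then with probability at least $1-\delta$, the algorithm described in the context, run with a $C$-oracle, outputs $C$ (as a partition of $\mathcal X$).
   Context: A clustering $C=\{C_1,\dots,C_k\}$ is center-based with centers $\mu_1,\dots,\mu_k$ if $x\in C_i\iff i=\arg\min_j d(x,\mu_j)$. It satisfies the $\gamma$-margin property if for all $i$, all $x\in C_i$, $y\in\mathcal X\setminus C_i$: $\gamma d(x,\mu_i)<d(y,\mu_i)$. A $C$-oracle answers same-cluster queries ($\mathcal O(x_1,x_2)$ = true iff $x_1,x_2$ lie in the same cluster of $C$) and cluster-assignment queries ($\mathcal O(x)=i$ iff $x\in C_i$). The algorithm (input $\mathcal X$, oracle, $k$, $\delta$; $\gamma$ known) sets $S_1=\mathcal X$, output $\mathcal C=\emptyset$, and $\eta=\beta\frac{\log k+\log(1/\delta)}{(\gamma-1)^4}$, where $\beta$ is a fixed absolute constant (the constant of a generalized Hoeffding inequality for bounded i.i.d. random vectors in a Hilbert space). For $i=1,\dots,k$: Phase 1: draw $l=k\eta+1$ elements $Z$ independently and uniformly at random from $S_i$; ask a cluster-assignment query for each; let $Z_t=\{x\in Z:\mathcal O(x)=t\}$, $p=\arg\max_t|Z_t|$, and $\mu_p'=\frac1{|Z_p|}\sum_{x\in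 Z_p}x$. Phase 2: sort $S_i$ in increasing order of $d(x,\mu_p')$ and, by binary search using same-cluster queries, find the radius $r_i$ such that the elements of $S_i$ in cluster $p$ are exactly those with $d(x,\mu_p')\le r_i$ (assuming such a radius exists); set $C_p'=\{x\in S_i: d(x,\mu_p')\le r_i\}$, $S_{i+1}=S_i\setminus C_p'$, $\mathcal C=\mathcal C\cup\{C_p'\}$. Output $\mathcal C$. *)

theory Defs
  imports "HOL-Probability.Probability"
begin

type_synonym point = "nat \<Rightarrow> real"

text \<open>Points of R^d are represented as functions nat => real vanishing outside {0..<d}.\<close>
definition Rd :: "nat \<Rightarrow> point set" where
  "Rd d = {x. \<forall>i\<ge>d. x i = 0}"

definition edist :: "nat \<Rightarrow> point \<Rightarrow> point \<Rightarrow> real" where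
  "edist d x y = sqrt (\<Sum>i<d. (x i - y i)^2)"

definition center_of_mass :: "point set \<Rightarrow> point" where
  "center_of_mass A = (\<lambda>i. (\<Sum>x\<in>A. x i) / real (card A))"

definition list_mean :: "point list \<Rightarrow> point" where
  "list_mean xs = (\<lambda>i. (\<Sum>x\<leftarrow>xs. x i) / real (length xs))"

text \<open>The clustering is given by a labelling cl : X -> {1..k}; cluster C_i = {x in X. cl x = i}.\<close>
definition cluster :: "point set \<Rightarrow> (point \<Rightarrow> nat) \<Rightarrow> nat \<Rightarrow> point set" where
  "cluster X cl i = {x\<in>X. cl x = i}"

definition clustering :: "point set \<Rightarrow> (point \<Rightarrow> nat) \<Rightarrow> nat \<Rightarrow> point set set" where
  "clustering X cl k = {cluster X cl i | i. i \<in> {1..k}}"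

definition center_based ::
  "nat \<Rightarrow> point set \<Rightarrow> (point \<Rightarrow> nat) \<Rightarrow> nat \<Rightarrow> (nat \<Rightarrow> point) \<Rightarrow> bool" where
  "center_based d X cl k \<mu> \<longleftrightarrow>
     (\<forall>x\<in>X. \<forall>i\<in>{1..k}. x \<in> cluster X cl i \<longleftrightarrow>
        (\<forall>j\<in>{1..k}. j \<noteq> i \<longrightarrow> edist d x (\<mu> i) < edist d x (\<mu> j)))"

definition margin_property ::
  "nat \<Rightarrow> real \<Rightarrow> point set \<Rightarrow> (point \<Rightarrow> nat) \<Rightarrow> nat \<Rightarrow> (nat \<Rightarrow> point) \<Rightarrow> bool" where
  "margin_property d \<gamma> X cl k \<mu> \<longleftrightarrow>
     (\<forall>i\<in>{1..k}. \<forall>x\<in>cluster X cl i. \<forall>y\<in>X - cluster X cl i.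
        \<gamma> * edist d x (\<mu> i) < edist d y (\<mu> i))"

definition label_count :: "(point \<Rightarrow> nat) \<Rightarrow> point list \<Rightarrow> nat \<Rightarrow> nat" where
  "label_count cl Z t = length (filter (\<lambda>x. cl x = t) Z)"

definition argmax_labels :: "(point \<Rightarrow> nat) \<Rightarrow> point list \<Rightarrow> nat set" where
  "argmax_labels cl Z = {t. \<forall>s. label_count cl Z s \<le> label_count cl Z t}"

primrec sample_list :: "'a set \<Rightarrow> nat \<Rightarrow> 'a list pmf" where
  "sample_list S 0 = return_pmf []"
| "sample_list S (Suc n) =
     bind_pmf (pmf_of_set S) (\<lambda>x. map_pmf (\<lambda>xs. x # xs) (sample_list S n))"

text \<open>Phase 2 (specification of the binary search): returns the ball C_p' if a radius
  separating cluster p inside S exists, and None (failure) otherwise.\<close>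
definition phase2 :: "nat \<Rightarrow> (point \<Rightarrow> nat) \<Rightarrow> point set \<Rightarrow> nat \<Rightarrow> point \<Rightarrow> point set option" where
  "phase2 d cl S p \<mu>' =
     (if \<exists>r. {x\<in>S. cl x = p} = {x\<in>S. edist d x \<mu>' \<le> r}
      then Some {x\<in>S. edist d x \<mu>' \<le> (SOME r. {x\<in>S. cl x = p} = {x\<in>S. edist d x \<mu>' \<le> r})}
      else None)"

text \<open>One iteration given the sample Z; tb is the tie-breaking rule of the argmax.\<close>
definition iteration :: "nat \<Rightarrow> (point \<Rightarrow> nat) \<Rightarrow> (point list \<Rightarrow> nat) \<Rightarrow> point set \<Rightarrow> point list
    \<Rightarrow> point set option" where
  "iteration d cl tb S Z =
     (let p = tb Z; \<mu>' = list_mean (filter (\<lambda>x. cl x = p) Z) in phase2 d cl S p \<mu>')"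

text \<open>run d cl tb l n S: remaining n iterations on the current set S; None = failure.\<close>
fun run :: "nat \<Rightarrow> (point \<Rightarrow> nat) \<Rightarrow> (point list \<Rightarrow> nat) \<Rightarrow> nat \<Rightarrow> nat \<Rightarrow> point set
    \<Rightarrow> point set set option pmf" where
  "run d cl tb l 0 S = return_pmf (Some {})"
| "run d cl tb l (Suc n) S =
     (if S = {} then return_pmf None else
      bind_pmf (sample_list S l) (\<lambda>Z.
        case iteration d cl tb S Z of
          None \<Rightarrow> return_pmf None
        | Some C' \<Rightarrow> map_pmf (map_option (insert C')) (run d cl tb l n (S - C'))))"

definition eta :: "real \<Rightarrow> nat \<Rightarrow> real \<Rightarrow> real \<Rightarrow> real" where
  "eta \<beta> k \<delta> \<gamma> = \<beta> * (ln (real k) + ln (1 / \<delta>)) / (\<gamma> - 1) ^ 4"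

definition algorithm :: "real \<Rightarrow> nat \<Rightarrow> point set \<Rightarrow> (point \<Rightarrow> nat) \<Rightarrow> (point list \<Rightarrow> nat)
    \<Rightarrow> nat \<Rightarrow> real \<Rightarrow> real \<Rightarrow> point set set option pmf" where
  "algorithm \<beta> d X cl tb k \<delta> \<gamma> =
     run d cl tb (k * nat \<lceil>eta \<beta> k \<delta> \<gamma>\<rceil> + 1) k X"

end

theory Submission
  imports Defs
begin


fun EE :: "'a set \<Rightarrow> nat \<Rightarrow> ('a list \<Rightarrow> real) \<Rightarrow> real" where
  "EE C 0 f = f []"
| "EE C (Suc m) f = (\<Sum>x\<in>C. EE C m (\<lambda>W. f (x # W))) / real (card C)"

lemma Ex_cong:
  "(\<And>W. length W = m \<Longrightarrow> set W \<subseteq> C \<Longrightarrow> f W = g W) \<Longrightarrow> EE C m f = EE C m g"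
proof (induction m arbitrary: f g)
  case 0 then show ?case by simp
next
  case (Suc m)
  have "\<And>x. x \<in> C \<Longrightarrow> EE C m (\<lambda>W. f (x # W)) = EE C m (\<lambda>W. g (x # W))"
    by (rule Suc.IH) (use Suc.prems in auto)
  then show ?case by (simp cong: sum.cong)
qed

lemma Ex_mono:
  "(\<And>W. length W = m \<Longrightarrow> set W \<subseteq> C \<Longrightarrow> f W \<le> g W) \<Longrightarrow> EE C m f \<le> EE C m g"
proof (induction m arbitrary: f g)
  case 0 then show ?case by simp
next
  case (Suc m)
  have "\<And>x. x \<in> C \<Longrightarrow> EE C m (\<lambda>W. f (x # W)) \<le> EE C m (\<lambda>W. g (x # W))"
    by (rule Suc.IH) (use Suc.prems in auto)
  then have "(\<Sum>x\<in>C. EE C m (\<lambda>W. f (x # W))) \<le> (\<Sum>x\<in>C. EE C m (\<lambda>W. g (x # W)))"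
    by (rule sum_mono)
  then show ?case by (simp add: divide_right_mono)
qed

lemma Ex_const:
  assumes "finite C" "C \<noteq> {}"
  shows "EE C m (\<lambda>_. c) = c"
  using assms by (induction m) auto

lemma Ex_sum:
  "EE C m (\<lambda>W. \<Sum>x\<in>A. h x W) = (\<Sum>x\<in>A. EE C m (h x))"
proof (induction m arbitrary: h)
  case 0 then show ?case by simp
next
  case (Suc m)
  have "EE C (Suc m) (\<lambda>W. \<Sum>x\<in>A. h x W) = (\<Sum>y\<in>C. \<Sum>x\<in>A. EE C m (\<lambda>W. h x (y # W))) / real (card C)"
    using Suc.IH[of "\<lambda>x W. h x (_ # W)"] by simp
  also have "\<dots> = (\<Sum>x\<in>A. \<Sum>y\<in>C. EE C m (\<lambda>W. h x (y # W))) / real (card C)"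
    by (subst sum.swap) simp
  also have "\<dots> = (\<Sum>x\<in>A. EE C (Suc m) (h x))"
    by (simp add: sum_divide_distrib)
  finally show ?case .
qed

lemma Ex_cmult: "EE C m (\<lambda>W. c * f W) = c * EE C m f"
proof (induction m arbitrary: f)
  case 0 then show ?case by simp
next
  case (Suc m)
  then show ?case by (simp add: sum_distrib_left)
qed

lemma Ex_add: "EE C m (\<lambda>W. f W + g W) = EE C m f + EE C m g"
proof (induction m arbitrary: f g)
  case 0 then show ?case by simp
next
  case (Suc m)
  then show ?case by (simp add: sum.distrib add_divide_distrib)
qed

lemma Ex_diff: "EE C m (\<lambda>W. f W - g W) = EE C m f - EE C m g"
  using Ex_add[of C m f "\<lambda>W. - g W"] Ex_cmult[of C m "-1" g] by simp

lemma pmf_bind_sample: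
  assumes "finite C" "C \<noteq> {}"
  shows "pmf (bind_pmf (sample_list C m) F) y = EE C m (\<lambda>Z. pmf (F Z) y)"
proof (induction m arbitrary: F)
  case 0 then show ?case by (simp add: bind_return_pmf)
next
  case (Suc m)
  have "bind_pmf (sample_list C (Suc m)) F =
        bind_pmf (pmf_of_set C) (\<lambda>x. bind_pmf (sample_list C m) (\<lambda>Z. F (x # Z)))"
    by (simp add: bind_assoc_pmf bind_map_pmf)
  have g: "\<And>G. pmf (bind_pmf (pmf_of_set C) G) y = (\<Sum>x\<in>C. pmf (G x) y) / real (card C)"
    by (simp add: pmf_bind integral_pmf_of_set assms)
  show ?case
    unfolding \<open>bind_pmf (sample_list C (Suc m)) F = _\<close> g Suc.IH by simp
qed

lemma prob_sample:
  assumes "finite C" "C \<noteq> {}"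
  shows "measure_pmf.prob (sample_list C m) A = EE C m (\<lambda>Z. if Z \<in> A then 1 else 0)"
proof -
  have "measure_pmf.prob (sample_list C m) A = pmf (map_pmf (\<lambda>Z. Z \<in> A) (sample_list C m)) True"
    by (simp add: pmf_map vimage_def)
  also have "\<dots> = pmf (bind_pmf (sample_list C m) (\<lambda>Z. return_pmf (Z \<in> A))) True"
    by (simp add: map_pmf_def)
  also have "\<dots> = EE C m (\<lambda>Z. if Z \<in> A then 1 else 0)"
    by (subst pmf_bind_sample[OF assms]) (simp add: pmf_return indicator_def of_bool_def)
  finally show ?thesis .
qed


lemma edist_L2: "edist d x y = L2_set (\<lambda>i. x i - y i) {..<d}"
  by (simp add: edist_def L2_set_def)

lemma edist_nonneg: "0 \<le> edist d x y"
  by (simp add: edist_L2)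

lemma edist_sym: "edist d x y = edist d y x"
  unfolding edist_def by (simp add: power2_commute)

lemma edist_tri: "edist d x z \<le> edist d x y + edist d y z"
proof -
  have "edist d x z = L2_set (\<lambda>i. (x i - y i) + (y i - z i)) {..<d}"
    by (simp add: edist_L2)
  also have "\<dots> \<le> edist d x y + edist d y z"
    unfolding edist_L2 by (rule L2_set_triangle_ineq)
  finally show ?thesis .
qed

lemma D_mean:
  assumes "W \<noteq> []"
  shows "list_mean W i - c i = (\<Sum>w\<leftarrow>W. w i - c i) / real (length W)"
proof -
  have "(\<Sum>w\<leftarrow>W. w i - c i) = (\<Sum>w\<leftarrow>W. w i) - real (length W) * c i"
    by (simp add: sum_list_subtractf sum_list_triv)
  then show ?thesis using assms by (simp add: list_mean_def field_simps)
qed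

lemma L2_sumlist: "L2_set (\<lambda>i. \<Sum>w\<leftarrow>W. f w i) A \<le> (\<Sum>w\<leftarrow>W. L2_set (f w) A)"
proof (induction W)
  case Nil then show ?case by (simp add: L2_set_def)
next
  case (Cons a W)
  have "L2_set (\<lambda>i. \<Sum>w\<leftarrow>a # W. f w i) A = L2_set (\<lambda>i. f a i + (\<Sum>w\<leftarrow>W. f w i)) A"
    by simp
  also have "\<dots> \<le> L2_set (f a) A + L2_set (\<lambda>i. \<Sum>w\<leftarrow>W. f w i) A"
    by (rule L2_set_triangle_ineq)
  also have "\<dots> \<le> L2_set (f a) A + (\<Sum>w\<leftarrow>W. L2_set (f w) A)"
    using Cons by simp
  finally show ?case by simp
qed

lemma edist_mean:
  assumes "W \<noteq> []"
  shows "edist d (list_mean W) c = L2_set (\<lambda>i. \<Sum>w\<leftarrow>W. w i - c i) {..<d} / real (length W)"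
proof -
  have "edist d (list_mean W) c = L2_set (\<lambda>i. (1 / real (length W)) * (\<Sum>w\<leftarrow>W. w i - c i)) {..<d}"
    unfolding edist_L2 using D_mean[OF assms] by simp
  also have "\<dots> = (1 / real (length W)) * L2_set (\<lambda>i. \<Sum>w\<leftarrow>W. w i - c i) {..<d}"
    by (subst L2_set_right_distrib) auto
  finally show ?thesis by simp
qed

lemma mean_close:
  assumes "W \<noteq> []" "\<forall>w\<in>set W. edist d w c \<le> r"
  shows "edist d (list_mean W) c \<le> r"
proof -
  have "L2_set (\<lambda>i. \<Sum>w\<leftarrow>W. w i - c i) {..<d} \<le> (\<Sum>w\<leftarrow>W. edist d w c)"
    using L2_sumlist[of "\<lambda>w i. w i - c i" W "{..<d}"] by (simp add: edist_L2)
  also have "\<dots> \<le> (\<Sum>w\<leftarrow>W. r)"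
    by (rule sum_list_mono) (use assms in auto)
  also have "\<dots> = real (length W) * r" by (simp add: sum_list_triv)
  finally show ?thesis using assms(1) by (simp add: edist_mean field_simps)
qed

lemma cosh_bound: "(exp (-b) + exp b) / 2 \<le> exp (b^2/2)" if "b \<ge> 0" for b :: real
proof -
  have "-(2*b) * (1/2) + ln (1 + (1/2) * (exp (2*b) - 1)) \<le> (2*b)^2 / 8"
    using Hoeffdings_lemma_aux[of "2*b" "1/2"] that by simp
  then have "ln ((1 + exp (2*b)) / 2) \<le> b + b^2/2"
    by (simp add: power2_eq_square field_simps)
  then have "(1 + exp (2*b)) / 2 \<le> exp (b + b^2/2)"
    by (smt (verit) exp_gt_zero exp_le_cancel_iff exp_ln)
  then have "(1 + exp (2*b)) / 2 * exp (-b) \<le> exp (b + b^2/2) * exp (-b)"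
    by (simp add: mult_right_mono)
  moreover have "(1 + exp (2*b)) / 2 * exp (-b) = (exp (-b) + exp b) / 2"
    by (simp add: field_simps flip: exp_add)
  moreover have "exp (b + b^2/2) * exp (-b) = exp (b^2/2)"
    by (simp flip: exp_add)
  ultimately show ?thesis by simp
qed

lemma avg_exp_le:
  fixes Y :: "'a \<Rightarrow> real"
  assumes "finite C" "\<forall>x\<in>C. \<bar>Y x\<bar> \<le> b" "(\<Sum>x\<in>C. Y x) = 0" "b \<ge> 0"
  shows "(\<Sum>x\<in>C. exp (Y x)) \<le> real (card C) * exp (b^2/2)"
proof (cases "b = 0")
  case True
  then have "\<forall>x\<in>C. Y x = 0" using assms by auto
  then show ?thesis using True by simp
next
  case False
  then have b: "b > 0" using assms by simp
  have cv: "convex_on UNIV exp"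
    using convex_on_exp[of 1] by simp
  have pt: "exp y \<le> ((b - y) * exp (-b) + (b + y) * exp b) / (2*b)" if "\<bar>y\<bar> \<le> b" for y
  proof -
    define t where "t = (b + y) / (2*b)"
    have t: "0 \<le> t" "t \<le> 1" using that b by (auto simp: t_def field_simps)
    have "exp ((1 - t) *\<^sub>R (-b) + t *\<^sub>R b) \<le> (1 - t) * exp (-b) + t * exp b"
      by (rule convex_onD[OF cv t]) auto
    moreover have "(1 - t) *\<^sub>R (-b) + t *\<^sub>R b = y" using b by (simp add: t_def field_simps)
    moreover have "(1 - t) * exp (-b) + t * exp b = ((b - y) * exp (-b) + (b + y) * exp b) / (2*b)"
      using b by (simp add: t_def field_simps)
    ultimately show ?thesis by simp
  qed
  have "(\<Sum>x\<in>C. exp (Y x)) \<le> (\<Sum>x\<in>C. ((b - Y x) * exp (-b) + (b + Y x) * exp b) / (2*b))"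
    by (rule sum_mono) (use assms pt in auto)
  also have "\<dots> = (\<Sum>x\<in>C. (b * exp (-b) + b * exp b) + Y x * (exp b - exp (-b))) / (2*b)"
    by (simp add: sum_divide_distrib algebra_simps)
  also have "\<dots> = real (card C) * ((exp (-b) + exp b) / 2)"
    using b by (simp add: sum.distrib assms(3) flip: sum_distrib_right) (simp add: field_simps)
  also have "\<dots> \<le> real (card C) * exp (b^2/2)"
    by (rule mult_left_mono[OF cosh_bound]) (use b in auto)
  finally show ?thesis .
qed


definition n2 :: "nat \<Rightarrow> point \<Rightarrow> real" where "n2 d v = (\<Sum>i<d. (v i)^2)"
definition DD :: "point \<Rightarrow> point list \<Rightarrow> point" where "DD \<mu> W = (\<lambda>i. \<Sum>w\<leftarrow>W. w i - \<mu> i)"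

lemma n2_nonneg: "0 \<le> n2 d v" by (simp add: n2_def sum_nonneg)

lemma step_pt:
  assumes "finite C" "\<forall>i. (\<Sum>x\<in>C. x i - \<mu> i) = 0" "\<forall>x\<in>C. edist d x \<mu> \<le> r" "0 \<le> r" "0 \<le> \<theta>"
  shows "(\<Sum>x\<in>C. exp (\<theta> * n2 d (\<lambda>i. (x i - \<mu> i) + s i)))
         \<le> real (card C) * (exp (\<theta> * r^2) * exp ((\<theta> + 2*\<theta>^2*r^2) * n2 d s))"
proof -
  define Y where "Y x = 2 * \<theta> * (\<Sum>i<d. (x i - \<mu> i) * s i)" for x
  define b where "b = 2 * \<theta> * r * sqrt (n2 d s)"
  have b0: "0 \<le> b" using assms by (simp add: b_def n2_nonneg)
  have exp_eq0: "n2 d (\<lambda>i. (x i - \<mu> i) + s i) = n2 d (\<lambda>i. x i - \<mu> i) + 2 * (\<Sum>i<d. (x i - \<mu> i) * s i) + n2 d s" for x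
  proof -
    have "\<And>i. ((x i - \<mu> i) + s i)^2 = (x i - \<mu> i)^2 + 2 * ((x i - \<mu> i) * s i) + (s i)^2"
      by (simp add: power2_sum)
    then show ?thesis by (simp only: n2_def sum.distrib sum_distrib_left)
  qed
  have exp_eq: "\<theta> * n2 d (\<lambda>i. (x i - \<mu> i) + s i) = \<theta> * n2 d (\<lambda>i. x i - \<mu> i) + Y x + \<theta> * n2 d s" for x
    unfolding exp_eq0 Y_def by (simp add: algebra_simps)
  have na: "n2 d (\<lambda>i. x i - \<mu> i) \<le> r^2" if "x \<in> C" for x
  proof -
    have "n2 d (\<lambda>i. x i - \<mu> i) = (edist d x \<mu>)^2"
      by (simp add: n2_def edist_def sum_nonneg)
    also have "\<dots> \<le> r^2" using assms that by (intro power_mono) (auto simp: edist_nonneg)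
    finally show ?thesis .
  qed
  have Yb: "\<bar>Y x\<bar> \<le> b" if "x \<in> C" for x
  proof -
    have "\<bar>\<Sum>i<d. (x i - \<mu> i) * s i\<bar> \<le> (\<Sum>i<d. \<bar>x i - \<mu> i\<bar> * \<bar>s i\<bar>)"
      by (rule order_trans[OF sum_abs]) (simp add: abs_mult)
    also have "\<dots> \<le> L2_set (\<lambda>i. x i - \<mu> i) {..<d} * L2_set s {..<d}"
      by (rule L2_set_mult_ineq)
    also have "\<dots> = edist d x \<mu> * sqrt (n2 d s)"
      by (simp add: edist_L2 n2_def L2_set_def)
    also have "\<dots> \<le> r * sqrt (n2 d s)"
      using assms that by (intro mult_right_mono) (auto simp: n2_nonneg)
    finally show ?thesis using assms by (simp add: Y_def b_def abs_mult mult_left_mono mult.assoc)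
  qed
  have Ysum: "(\<Sum>x\<in>C. Y x) = 0"
  proof -
    have "(\<Sum>x\<in>C. Y x) = 2 * \<theta> * (\<Sum>i<d. s i * (\<Sum>x\<in>C. x i - \<mu> i))"
      unfolding Y_def by (simp add: sum_distrib_left sum_distrib_right sum.swap[of _ C] mult_ac)
    then show ?thesis using assms(2) by simp
  qed
  have pt: "exp (\<theta> * n2 d (\<lambda>i. (x i - \<mu> i) + s i)) \<le> exp (\<theta> * r^2 + \<theta> * n2 d s) * exp (Y x)"
    if "x \<in> C" for x
  proof (cases "\<theta> = 0")
    case True then show ?thesis by (simp add: Y_def)
  next
    case False
    then have th: "\<theta> > 0" using assms by simp
    have "\<theta> * n2 d (\<lambda>i. (x i - \<mu> i) + s i) = \<theta> * n2 d (\<lambda>i. x i - \<mu> i) + Y x + \<theta> * n2 d s"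
      by (rule exp_eq)
    also have "\<dots> \<le> (\<theta> * r^2 + \<theta> * n2 d s) + Y x"
      using na[OF that] th by (simp add: mult_left_mono)
    finally show ?thesis by (simp flip: exp_add)
  qed
  have "(\<Sum>x\<in>C. exp (\<theta> * n2 d (\<lambda>i. (x i - \<mu> i) + s i)))
        \<le> (\<Sum>x\<in>C. exp (\<theta> * r^2 + \<theta> * n2 d s) * exp (Y x))"
    by (rule sum_mono) (rule pt)
  also have "\<dots> = exp (\<theta> * r^2 + \<theta> * n2 d s) * (\<Sum>x\<in>C. exp (Y x))"
    by (simp add: sum_distrib_left)
  also have "\<dots> \<le> exp (\<theta> * r^2 + \<theta> * n2 d s) * (real (card C) * exp (b^2/2))"
    by (intro mult_left_mono avg_exp_le) (use assms Yb Ysum b0 in auto)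
  also have "b^2/2 = 2*\<theta>^2*r^2 * n2 d s"
    by (simp add: b_def power_mult_distrib n2_nonneg)
  also have "exp (\<theta> * r^2 + \<theta> * n2 d s) * (real (card C) * exp (2*\<theta>^2*r^2 * n2 d s))
           = real (card C) * (exp (\<theta> * r^2) * exp ((\<theta> + 2*\<theta>^2*r^2) * n2 d s))"
    by (simp add: algebra_simps flip: exp_add)
  finally show ?thesis .
qed

lemma DD_Cons: "DD \<mu> (x # W) = (\<lambda>i. (x i - \<mu> i) + DD \<mu> W i)"
  by (simp add: DD_def)

lemma mgf:
  assumes C: "finite C" "C \<noteq> {}" "\<forall>i. (\<Sum>x\<in>C. x i - \<mu> i) = 0" "\<forall>x\<in>C. edist d x \<mu> \<le> r" "0 \<le> r"
  shows "0 \<le> \<theta> \<Longrightarrow> 4*\<theta>*r^2*m \<le> 1 \<Longrightarrow> EE C m (\<lambda>W. exp (\<theta> * n2 d (DD \<mu> W))) \<le> exp (2*\<theta>*r^2*m)"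
proof (induction m arbitrary: \<theta>)
  case 0
  then show ?case by (simp add: DD_def n2_def)
next
  case (Suc m)
  define \<theta>' where "\<theta>' = \<theta> + 2*\<theta>^2*r^2"
  define a where "a = 4*\<theta>*r^2"
  have a0: "0 \<le> a" using Suc.prems by (simp add: a_def)
  have am1: "a * (m+1) \<le> 1" using Suc.prems by (simp add: a_def)
  have am: "a * m \<le> 1 - a" using am1 by (simp add: algebra_simps)
  have th': "4*\<theta>'*r^2 = a + a^2/2" by (simp add: \<theta>'_def a_def power2_eq_square algebra_simps)
  have "a^2/2*m = a/2 * (a*m)" by (simp add: power2_eq_square)
  also have "\<dots> \<le> a/2 * 1" using am am1 a0 by (intro mult_left_mono) (auto simp: algebra_simps)
  finally have f1: "a^2/2*m \<le> a/2" by simp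
  have "(a + a^2/2) * m = a*m + a^2/2*m" by (simp add: algebra_simps)
  also have "\<dots> \<le> (1 - a) + a/2" by (rule add_mono[OF am f1])
  also have "\<dots> \<le> 1" using a0 by simp
  finally have "(a + a^2/2) * m \<le> 1" .
  then have c1: "4*\<theta>'*r^2*m \<le> 1" using th' by simp
  have c0: "0 \<le> \<theta>'" using Suc.prems by (simp add: \<theta>'_def)
  have "a * (a*m) \<le> a * 1" using am a0 by (intro mult_left_mono) auto
  have e1: "\<theta>*r^2 + 2*\<theta>'*r^2*m = a/4 + a*m/2 + a*(a*m)/4"
  proof -
    have "2*\<theta>'*r^2*m = (4*\<theta>'*r^2)*m/2" by simp
    also have "\<dots> = a*m/2 + a*(a*m)/4" unfolding th' by (simp add: power2_eq_square algebra_simps)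
    finally show ?thesis by (simp add: a_def)
  qed
  have e2: "2*\<theta>*r^2*(Suc m) = a/2 + a*m/2" by (simp add: a_def algebra_simps)
  have c2: "\<theta>*r^2 + 2*\<theta>'*r^2*m \<le> 2*\<theta>*r^2*(Suc m)"
    unfolding e1 e2 using \<open>a * (a*m) \<le> a * 1\<close> by simp
  have "EE C (Suc m) (\<lambda>W. exp (\<theta> * n2 d (DD \<mu> W)))
      = EE C m (\<lambda>W. (1 / real (card C)) * (\<Sum>x\<in>C. exp (\<theta> * n2 d (DD \<mu> (x # W)))))"
    by (subst Ex_cmult) (simp add: Ex_sum)
  also have "\<dots> \<le> EE C m (\<lambda>W. exp (\<theta>*r^2) * exp (\<theta>' * n2 d (DD \<mu> W)))"
  proof (rule Ex_mono)
    fix W :: "point list"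
    have "(\<Sum>x\<in>C. exp (\<theta> * n2 d (DD \<mu> (x # W))))
       \<le> real (card C) * (exp (\<theta> * r^2) * exp (\<theta>' * n2 d (DD \<mu> W)))"
      unfolding DD_Cons \<theta>'_def by (rule step_pt) (use C Suc.prems in auto)
    then show "(1 / real (card C)) * (\<Sum>x\<in>C. exp (\<theta> * n2 d (DD \<mu> (x # W))))
       \<le> exp (\<theta>*r^2) * exp (\<theta>' * n2 d (DD \<mu> W))"
      using C by (simp add: field_simps card_gt_0_iff)
  qed
  also have "\<dots> = exp (\<theta>*r^2) * EE C m (\<lambda>W. exp (\<theta>' * n2 d (DD \<mu> W)))"
    by (rule Ex_cmult)
  also have "\<dots> \<le> exp (\<theta>*r^2) * exp (2*\<theta>'*r^2*m)"
    using Suc.IH[OF c0 c1] by simp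
  also have "\<dots> = exp (\<theta>*r^2 + 2*\<theta>'*r^2*m)" by (simp flip: exp_add)
  also have "\<dots> \<le> exp (2*\<theta>*r^2*(Suc m))" using c2 by simp
  finally show ?case .
qed

lemma conc:
  assumes C: "finite C" "C \<noteq> {}" "\<forall>i. (\<Sum>x\<in>C. x i - \<mu> i) = 0" "\<forall>x\<in>C. edist d x \<mu> \<le> r"
    and r: "0 < r" and m: "1 \<le> m" and e: "0 < \<epsilon>"
  shows "EE C m (\<lambda>W. if \<epsilon> * r < edist d (list_mean W) \<mu> then 1 else 0) \<le> exp (1/2 - m*\<epsilon>^2/4)"
proof -
  define \<theta> where "\<theta> = 1 / (4 * r^2 * m)"
  have th0: "0 \<le> \<theta>" using r m by (simp add: \<theta>_def)
  have th1: "4*\<theta>*r^2*m \<le> 1" using r m by (simp add: \<theta>_def)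
  have key: "\<theta> * (m*\<epsilon>*r)^2 = m*\<epsilon>^2/4" using r m by (simp add: \<theta>_def power2_eq_square field_simps)
  have "EE C m (\<lambda>W. if \<epsilon> * r < edist d (list_mean W) \<mu> then 1 else 0)
     \<le> EE C m (\<lambda>W. exp (-(m*\<epsilon>^2/4)) * exp (\<theta> * n2 d (DD \<mu> W)))"
  proof (rule Ex_mono)
    fix W :: "point list" assume W: "length W = m"
    then have Wne: "W \<noteq> []" using m by auto
    have ed: "edist d (list_mean W) \<mu> = sqrt (n2 d (DD \<mu> W)) / m"
      using edist_mean[OF Wne, of d \<mu>] W by (simp add: L2_set_def n2_def DD_def)
    show "(if \<epsilon> * r < edist d (list_mean W) \<mu> then 1 else 0)
        \<le> exp (-(m*\<epsilon>^2/4)) * exp (\<theta> * n2 d (DD \<mu> W))"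
    proof (cases "\<epsilon> * r < edist d (list_mean W) \<mu>")
      case True
      then have "m*\<epsilon>*r < sqrt (n2 d (DD \<mu> W))" using ed m by (simp add: field_simps)
      then have "(m*\<epsilon>*r)^2 < (sqrt (n2 d (DD \<mu> W)))^2"
        using e r m by (intro power_strict_mono) auto
      then have "(m*\<epsilon>*r)^2 \<le> n2 d (DD \<mu> W)" by (simp add: n2_nonneg)
      then have "\<theta> * (m*\<epsilon>*r)^2 \<le> \<theta> * n2 d (DD \<mu> W)" using th0 by (rule mult_left_mono)
      then have "0 \<le> -(m*\<epsilon>^2/4) + \<theta> * n2 d (DD \<mu> W)" using key by simp
      then have "1 \<le> exp (-(m*\<epsilon>^2/4) + \<theta> * n2 d (DD \<mu> W))" by simp
      then have "1 \<le> exp (-(m*\<epsilon>^2/4)) * exp (\<theta> * n2 d (DD \<mu> W))"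
        by (simp only: exp_add)
      with True show ?thesis by simp
    qed simp
  qed
  also have "\<dots> = exp (-(m*\<epsilon>^2/4)) * EE C m (\<lambda>W. exp (\<theta> * n2 d (DD \<mu> W)))"
    by (rule Ex_cmult)
  also have "\<dots> \<le> exp (-(m*\<epsilon>^2/4)) * exp (2*\<theta>*r^2*m)"
    using mgf[OF C _ th0 th1] r by simp
  also have "2*\<theta>*r^2*m = 1/2" using r m by (simp add: \<theta>_def)
  also have "exp (-(m*\<epsilon>^2/4)) * exp (1/2) = exp (1/2 - m*\<epsilon>^2/4)" by (simp flip: exp_add)
  finally show ?thesis .
qed


lemma filter_weights:
  assumes S: "finite S" and CS: "C = {x\<in>S. P x}" and Cne: "C \<noteq> {}"
  shows "\<exists>w. (\<forall>m. 0 \<le> w m) \<and> (\<Sum>m\<le>l. w m) = 1 \<and>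
             (\<forall>g. EE S l (\<lambda>Z. g (filter P Z)) = (\<Sum>m\<le>l. w m * EE C m g))"
proof (induction l)
  case 0
  show ?case by (rule exI[of _ "\<lambda>m. 1"]) simp
next
  case (Suc l)
  then obtain w where w0: "\<forall>m. 0 \<le> w m" and w1: "(\<Sum>m\<le>l. w m) = 1"
    and wg: "\<And>g. EE S l (\<lambda>Z. g (filter P Z)) = (\<Sum>m\<le>l. w m * EE C m g)" by blast
  have Sne: "S \<noteq> {}" using Cne CS by auto
  have fC: "finite C" using S CS by simp
  define a where "a = real (card C) / real (card S)"
  define b where "b = real (card (S \<inter> - {x. P x})) / real (card S)"
  have cardS: "real (card S) = real (card C) + real (card (S \<inter> - {x. P x}))"
  proof -
    have "card S = card (S \<inter> {x. P x}) + card (S \<inter> - {x. P x})"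
      using S by (metis Int_Diff_Un Int_Diff_disjoint Diff_eq card_Un_disjoint finite_Int)
    moreover have "S \<inter> {x. P x} = C" using CS by auto
    ultimately show ?thesis by simp
  qed
  have cS: "real (card S) > 0" using S Sne by (simp add: card_gt_0_iff)
  have "a + b = (real (card C) + real (card (S \<inter> - {x. P x}))) / real (card S)"
    by (simp add: a_def b_def add_divide_distrib)
  then have ab: "a + b = 1" using cS by (simp flip: cardS)
  have a0: "0 \<le> a" "0 \<le> b" by (simp_all add: a_def b_def)
  define w' where "w' m = a * (if m = 0 then 0 else w (m - 1)) + b * (if m \<le> l then w m else 0)" for m
  have key: "EE S (Suc l) (\<lambda>Z. g (filter P Z)) = (\<Sum>m\<le>Suc l. w' m * EE C m g)" for g
  proof -
    have "EE S (Suc l) (\<lambda>Z. g (filter P Z))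
        = (\<Sum>x\<in>S. if P x then EE S l (\<lambda>Z. g (x # filter P Z)) else EE S l (\<lambda>Z. g (filter P Z))) / real (card S)"
    proof -
      have "\<And>x. EE S l (\<lambda>Z. g (filter P (x # Z))) = (if P x then EE S l (\<lambda>Z. g (x # filter P Z)) else EE S l (\<lambda>Z. g (filter P Z)))"
        by simp
      then show ?thesis by (simp only: EE.simps)
    qed
    also have "\<dots> = ((\<Sum>x\<in>C. EE S l (\<lambda>Z. g (x # filter P Z)))
                     + real (card (S \<inter> - {x. P x})) * EE S l (\<lambda>Z. g (filter P Z))) / real (card S)"
    proof -
      have "S \<inter> {x. P x} = C" using CS by auto
      then show ?thesis by (simp add: sum.If_cases S)
    qed
    also have "(\<Sum>x\<in>C. EE S l (\<lambda>Z. g (x # filter P Z))) = (\<Sum>m\<le>l. w m * (real (card C) * EE C (Suc m) g))"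
    proof -
      have "(\<Sum>x\<in>C. EE S l (\<lambda>Z. g (x # filter P Z))) = (\<Sum>x\<in>C. \<Sum>m\<le>l. w m * EE C m (\<lambda>W. g (x # W)))"
        using wg[of "\<lambda>W. g (_ # W)"] by simp
      also have "\<dots> = (\<Sum>m\<le>l. w m * (\<Sum>x\<in>C. EE C m (\<lambda>W. g (x # W))))"
        by (subst sum.swap) (simp add: sum_distrib_left)
      also have "\<dots> = (\<Sum>m\<le>l. w m * (real (card C) * EE C (Suc m) g))"
        using fC Cne by simp
      finally show ?thesis .
    qed
    also have "EE S l (\<lambda>Z. g (filter P Z)) = (\<Sum>m\<le>l. w m * EE C m g)" by (rule wg)
    also have "(\<Sum>m\<le>l. w m * (real (card C) * EE C (Suc m) g)) = real (card C) * (\<Sum>m\<le>l. w m * EE C (Suc m) g)"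
      by (simp add: sum_distrib_left mult.left_commute)
    finally have L: "EE S (Suc l) (\<lambda>Z. g (filter P Z)) = a * (\<Sum>m\<le>l. w m * EE C (Suc m) g) + b * (\<Sum>m\<le>l. w m * EE C m g)"
      unfolding a_def b_def by (simp add: add_divide_distrib)
    have R1: "(\<Sum>m\<le>Suc l. (if m = 0 then 0 else w (m - 1)) * EE C m g) = (\<Sum>m\<le>l. w m * EE C (Suc m) g)"
      by (subst sum.atMost_Suc_shift) simp
    have R2: "(\<Sum>m\<le>Suc l. (if m \<le> l then w m else 0) * EE C m g) = (\<Sum>m\<le>l. w m * EE C m g)"
      by (subst sum.atMost_Suc) simp
    have "(\<Sum>m\<le>Suc l. w' m * EE C m g)
        = a * (\<Sum>m\<le>Suc l. (if m = 0 then 0 else w (m - 1)) * EE C m g) + b * (\<Sum>m\<le>Suc l. (if m \<le> l then w m else 0) * EE C m g)"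
    proof -
      have "\<And>m. w' m * EE C m g = a * ((if m = 0 then 0 else w (m - 1)) * EE C m g) + b * ((if m \<le> l then w m else 0) * EE C m g)"
        unfolding w'_def by (simp only: distrib_right mult.assoc)
      then show ?thesis by (simp only: sum.distrib sum_distrib_left)
    qed
    then show ?thesis using L R1 R2 by simp
  qed
  have "(\<Sum>m\<le>Suc l. w' m) = a * (\<Sum>m\<le>Suc l. (if m = 0 then 0 else w (m - 1))) + b * (\<Sum>m\<le>Suc l. (if m \<le> l then w m else 0))"
    unfolding w'_def by (simp only: sum.distrib sum_distrib_left)
  also have "(\<Sum>m\<le>Suc l. (if m = 0 then 0 else w (m - 1))) = 1"
    by (subst sum.atMost_Suc_shift) (simp add: w1)
  also have "(\<Sum>m\<le>Suc l. (if m \<le> l then w m else 0)) = 1"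
    by (subst sum.atMost_Suc) (simp add: w1)
  finally have "(\<Sum>m\<le>Suc l. w' m) = 1" using ab by simp
  moreover have "\<forall>m. 0 \<le> w' m" using w0 a0 by (simp add: w'_def)
  ultimately show ?case using key by blast
qed

lemma label_bound:
  assumes S: "finite S" and CS: "C = {x\<in>S. P x}" and Cne: "C \<noteq> {}"
    and bnd: "\<And>m. M \<le> m \<Longrightarrow> EE C m h \<le> B" and B0: "0 \<le> B"
  shows "EE S l (\<lambda>Z. if M \<le> length (filter P Z) then h (filter P Z) else 0) \<le> B"
proof -
  obtain w where w0: "\<forall>m. 0 \<le> w m" and w1: "(\<Sum>m\<le>l. w m) = 1"
    and wg: "\<And>g. EE S l (\<lambda>Z. g (filter P Z)) = (\<Sum>m\<le>l. w m * EE C m g)"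
    using filter_weights[OF S CS Cne, of l] by blast
  define g where "g W = (if M \<le> length W then h W else 0)" for W
  have fC: "finite C" using S CS by simp
  have gb: "EE C m g \<le> B" for m
  proof (cases "M \<le> m")
    case True
    have "EE C m g = EE C m h" by (rule Ex_cong) (use True in \<open>auto simp: g_def\<close>)
    then show ?thesis using bnd[OF True] by simp
  next
    case False
    have "EE C m g = EE C m (\<lambda>_. 0)" by (rule Ex_cong) (use False in \<open>auto simp: g_def\<close>)
    then show ?thesis using Ex_const[OF fC Cne] B0 by simp
  qed
  have "EE S l (\<lambda>Z. if M \<le> length (filter P Z) then h (filter P Z) else 0) = EE S l (\<lambda>Z. g (filter P Z))"
    by (simp add: g_def)
  also have "\<dots> = (\<Sum>m\<le>l. w m * EE C m g)" by (rule wg)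
  also have "\<dots> \<le> (\<Sum>m\<le>l. w m * B)"
    by (rule sum_mono) (use w0 gb in \<open>auto intro: mult_left_mono\<close>)
  also have "\<dots> = B" using w1 by (simp flip: sum_distrib_right)
  finally show ?thesis .
qed


lemma pmf_map_ge: "pmf M x \<le> pmf (map_pmf f M) (f x)"
proof -
  have "pmf M x = measure_pmf.prob M {x}" by (simp add: measure_pmf_single)
  also have "\<dots> \<le> measure_pmf.prob M (f -` {f x})"
    by (rule measure_pmf.finite_measure_mono) auto
  finally show ?thesis by (simp add: pmf_map)
qed

lemma phase2_eq:
  assumes "{x\<in>S. cl x = p} = {x\<in>S. edist d x \<mu>' \<le> r}"
  shows "phase2 d cl S p \<mu>' = Some {x\<in>S. cl x = p}"
proof -
  have ex: "\<exists>r. {x\<in>S. cl x = p} = {x\<in>S. edist d x \<mu>' \<le> r}" using assms by blast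
  have "{x\<in>S. cl x = p} = {x\<in>S. edist d x \<mu>' \<le> (SOME r. {x\<in>S. cl x = p} = {x\<in>S. edist d x \<mu>' \<le> r})}"
    by (rule someI_ex[OF ex])
  then show ?thesis using ex unfolding phase2_def by simp
qed

lemma com_sum0:
  assumes "finite C" "C \<noteq> {}"
  shows "(\<Sum>x\<in>C. x i - center_of_mass C i) = 0"
  using assms by (simp add: sum_subtractf center_of_mass_def card_gt_0_iff)

lemma count_sum:
  assumes "finite R" "\<forall>z\<in>set Z. cl z \<in> R"
  shows "(\<Sum>t\<in>R. label_count cl Z t) = length Z"
  using assms(2)
proof (induction Z)
  case Nil then show ?case by (simp add: label_count_def)
next
  case (Cons z Z)
  have "(\<Sum>t\<in>R. label_count cl (z # Z) t) = (\<Sum>t\<in>R. (if cl z = t then 1 else 0) + label_count cl Z t)"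
    by (rule sum.cong) (auto simp: label_count_def)
  also have "\<dots> = 1 + (\<Sum>t\<in>R. label_count cl Z t)"
    using Cons.prems assms(1) by (simp add: sum.distrib)
  finally show ?case using Cons by simp
qed

context
  fixes d :: nat and X :: "point set" and k :: nat and cl :: "point \<Rightarrow> nat"
    and tb :: "point list \<Rightarrow> nat" and \<gamma> :: real
  assumes fin: "finite X" and lab: "\<forall>x\<in>X. cl x \<in> {1..k}"
    and ne: "\<forall>i\<in>{1..k}. cluster X cl i \<noteq> {}"
    and marg: "margin_property d \<gamma> X cl k (\<lambda>i. center_of_mass (cluster X cl i))"
    and g1: "1 < \<gamma>" and tbA: "\<forall>Z. Z \<noteq> [] \<longrightarrow> tb Z \<in> argmax_labels cl Z"
begin

definition "Sof R = {x\<in>X. cl x \<in> R}"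
definition "mu i = center_of_mass (cluster X cl i)"
definition "rad i = Max ((\<lambda>x. edist d x (mu i)) ` cluster X cl i)"
definition "badset R = {Z. \<not> (tb Z \<in> R \<and> iteration d cl tb (Sof R) Z = Some (cluster X cl (tb Z)))}"

lemma fin_cl: "finite (cluster X cl i)"
  using fin by (simp add: cluster_def)

lemma rad_ge: "i \<in> {1..k} \<Longrightarrow> x \<in> cluster X cl i \<Longrightarrow> edist d x (mu i) \<le> rad i"
  unfolding rad_def by (rule Max_ge) (use fin_cl in auto)

lemma rad_in: "i \<in> {1..k} \<Longrightarrow> \<exists>x\<in>cluster X cl i. edist d x (mu i) = rad i"
proof -
  assume i: "i \<in> {1..k}"
  have "rad i \<in> (\<lambda>x. edist d x (mu i)) ` cluster X cl i"
    unfolding rad_def by (rule Max_in) (use fin_cl ne i in auto)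
  then show ?thesis by auto
qed

lemma rad_nonneg: "i \<in> {1..k} \<Longrightarrow> 0 \<le> rad i"
proof -
  assume "i \<in> {1..k}"
  then obtain x where "edist d x (mu i) = rad i" using rad_in by blast
  then show ?thesis using edist_nonneg[of d x "mu i"] by simp
qed

lemma Sof_fin: "finite (Sof R)" using fin by (simp add: Sof_def)

lemma Sof_cl: "p \<in> R \<Longrightarrow> {x\<in>Sof R. cl x = p} = cluster X cl p"
  by (auto simp: Sof_def cluster_def)

lemma Sof_diff: "p \<in> R \<Longrightarrow> Sof R - cluster X cl p = Sof (R - {p})"
  by (auto simp: Sof_def cluster_def)

lemma Sof_ne: "R \<subseteq> {1..k} \<Longrightarrow> R \<noteq> {} \<Longrightarrow> Sof R \<noteq> {}"
proof -
  assume "R \<subseteq> {1..k}" "R \<noteq> {}"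
  then obtain i where i: "i \<in> R" "i \<in> {1..k}" by blast
  then obtain x where "x \<in> cluster X cl i" using ne by blast
  then show ?thesis using i by (auto simp: Sof_def cluster_def)
qed

lemma far_bound:
  assumes t: "t \<in> {1..k}" and m: "1 \<le> m" and e: "0 < \<epsilon>"
  shows "EE (cluster X cl t) m (\<lambda>W. if \<epsilon> * rad t < edist d (list_mean W) (mu t) then 1 else 0)
         \<le> (if 1 \<le> \<epsilon> then 0 else exp (1/2 - m*\<epsilon>^2/4))"
proof -
  let ?C = "cluster X cl t"
  have Cf: "finite ?C" by (rule fin_cl)
  have Cn: "?C \<noteq> {}" using ne t by blast
  have C0: "\<forall>i. (\<Sum>x\<in>?C. x i - mu t i) = 0" using com_sum0[OF Cf Cn] by (simp add: mu_def)
  have Cr: "\<forall>x\<in>?C. edist d x (mu t) \<le> rad t" using rad_ge[OF t] by blast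
  have r0: "0 \<le> rad t" by (rule rad_nonneg[OF t])
  show ?thesis
  proof (cases "1 \<le> \<epsilon> \<or> rad t = 0")
    case True
    have "EE ?C m (\<lambda>W. if \<epsilon> * rad t < edist d (list_mean W) (mu t) then 1 else 0) = EE ?C m (\<lambda>_. 0)"
    proof (rule Ex_cong)
      fix W :: "point list" assume W: "length W = m" "set W \<subseteq> ?C"
      then have "W \<noteq> []" using m by auto
      then have "edist d (list_mean W) (mu t) \<le> rad t"
        by (rule mean_close) (use W Cr in auto)
      moreover have "rad t \<le> \<epsilon> * rad t" using True r0 by (auto intro: mult_right_mono[of 1 \<epsilon>, simplified])
      ultimately show "(if \<epsilon> * rad t < edist d (list_mean W) (mu t) then 1 else 0) = (0::real)" by simp
    qed
    then show ?thesis using Ex_const[OF Cf Cn] by simp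
  next
    case False
    then have "0 < rad t" using r0 by simp
    then show ?thesis using conc[OF Cf Cn C0 Cr _ m e] False by simp
  qed
qed

lemma geom:
  assumes p: "p \<in> {1..k}" and close: "edist d \<mu>' (mu p) \<le> \<epsilon> * rad p"
    and e: "0 \<le> \<epsilon>" "\<epsilon> \<le> (\<gamma>-1)/2" and S: "S \<subseteq> X"
  shows "{x\<in>S. cl x = p} = {x\<in>S. edist d x \<mu>' \<le> (1+\<epsilon>) * rad p}"
proof -
  have r0: "0 \<le> rad p" by (rule rad_nonneg[OF p])
  have A: "edist d x \<mu>' \<le> (1+\<epsilon>) * rad p" if "x \<in> S" "cl x = p" for x
  proof -
    have "x \<in> cluster X cl p" using that S by (auto simp: cluster_def)
    then have "edist d x (mu p) \<le> rad p" by (rule rad_ge[OF p])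
    moreover have "edist d x \<mu>' \<le> edist d x (mu p) + edist d (mu p) \<mu>'" by (rule edist_tri)
    moreover have "edist d (mu p) \<mu>' = edist d \<mu>' (mu p)" by (rule edist_sym)
    ultimately show ?thesis using close by (simp add: algebra_simps)
  qed
  have B: "\<not> edist d x \<mu>' \<le> (1+\<epsilon>) * rad p" if "x \<in> S" "cl x \<noteq> p" for x
  proof -
    obtain x0 where x0: "x0 \<in> cluster X cl p" "edist d x0 (mu p) = rad p" using rad_in[OF p] by blast
    have "x \<in> X - cluster X cl p" using that S by (auto simp: cluster_def)
    then have "\<gamma> * edist d x0 (mu p) < edist d x (mu p)"
      using marg p x0(1) unfolding margin_property_def mu_def by blast
    then have g: "\<gamma> * rad p < edist d x (mu p)" using x0 by simp
    have "edist d x (mu p) \<le> edist d x \<mu>' + edist d \<mu>' (mu p)" by (rule edist_tri)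
    then have "\<gamma> * rad p - \<epsilon> * rad p < edist d x \<mu>'" using g close by linarith
    moreover have "(1+\<epsilon>) * rad p \<le> \<gamma> * rad p - \<epsilon> * rad p"
    proof -
      have "(1+\<epsilon>) * rad p \<le> (\<gamma> - \<epsilon>) * rad p" using e r0 by (intro mult_right_mono) auto
      then show ?thesis by (simp add: algebra_simps)
    qed
    ultimately show ?thesis by simp
  qed
  show ?thesis using A B by blast
qed

lemma good_pt:
  assumes R: "R \<subseteq> {1..k}" "R \<noteq> {}" and Z: "length Z = k*N+1" "set Z \<subseteq> Sof R"
    and e: "0 \<le> \<epsilon>" "\<epsilon> \<le> (\<gamma>-1)/2"
  shows "tb Z \<in> R \<and> N+1 \<le> label_count cl Z (tb Z) \<and>
        ((card R = 1 \<or> \<not> (\<epsilon> * rad (tb Z) < edist d (list_mean (filter (\<lambda>x. cl x = tb Z) Z)) (mu (tb Z))))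
          \<longrightarrow> Z \<notin> badset R)"
proof -
  define p where "p = tb Z"
  have Zne: "Z \<noteq> []" using Z by auto
  have am: "\<forall>s. label_count cl Z s \<le> label_count cl Z p"
    using tbA Zne by (simp add: p_def argmax_labels_def)
  have labs: "\<forall>z\<in>set Z. cl z \<in> R" using Z by (auto simp: Sof_def)
  have fR: "finite R" using R finite_subset by blast
  have cR: "card R \<le> k" using card_mono[OF _ R(1)] by simp
  have "k*N + 1 = (\<Sum>t\<in>R. label_count cl Z t)" using count_sum[OF fR labs] Z by simp
  also have "\<dots> \<le> (\<Sum>t\<in>R. label_count cl Z p)" by (rule sum_mono) (use am in auto)
  also have "\<dots> = card R * label_count cl Z p" by simp
  also have "\<dots> \<le> k * label_count cl Z p" using cR by simp
  finally have kk: "k*N + 1 \<le> k * label_count cl Z p" .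
  have cnt: "N+1 \<le> label_count cl Z p"
  proof (rule ccontr)
    assume "\<not> N+1 \<le> label_count cl Z p"
    then have "label_count cl Z p \<le> N" by simp
    then have "k * label_count cl Z p \<le> k * N" by (rule mult_le_mono2)
    then show False using kk by linarith
  qed
  define W where "W = filter (\<lambda>x. cl x = p) Z"
  have Wne: "W \<noteq> []" using cnt by (auto simp: W_def label_count_def)
  then obtain z where z: "z \<in> set W" by (cases W) auto
  then have pR: "p \<in> R" using labs by (auto simp: W_def)
  have pk: "p \<in> {1..k}" using pR R by auto
  have SX: "Sof R \<subseteq> X" by (auto simp: Sof_def)
  have it: "iteration d cl tb (Sof R) Z = phase2 d cl (Sof R) p (list_mean W)"
    by (simp add: iteration_def Let_def p_def W_def)
  have concl: "Z \<notin> badset R" if H: "card R = 1 \<or> \<not> (\<epsilon> * rad p < edist d (list_mean W) (mu p))"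
  proof -
    have "\<exists>r. {x\<in>Sof R. cl x = p} = {x\<in>Sof R. edist d x (list_mean W) \<le> r}"
    proof (cases "card R = 1")
      case True
      then obtain q where "R = {q}" by (auto simp: card_Suc_eq)
      then have Rp: "R = {p}" using pR by simp
      define r where "r = (\<Sum>y\<in>Sof R. edist d y (list_mean W))"
      have "edist d x (list_mean W) \<le> r" if "x \<in> Sof R" for x
        unfolding r_def by (rule member_le_sum) (use that Sof_fin edist_nonneg in auto)
      moreover have "cl x = p" if "x \<in> Sof R" for x using that Rp by (simp add: Sof_def)
      ultimately show ?thesis by blast
    next
      case False
      then have "edist d (list_mean W) (mu p) \<le> \<epsilon> * rad p" using H by simp
      from geom[OF pk this e SX] show ?thesis by blast
    qed
    then obtain r where "{x\<in>Sof R. cl x = p} = {x\<in>Sof R. edist d x (list_mean W) \<le> r}" by blast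
    from phase2_eq[OF this] have "phase2 d cl (Sof R) p (list_mean W) = Some (cluster X cl p)"
      using Sof_cl[OF pR] by simp
    then show ?thesis using it pR by (simp add: badset_def p_def)
  qed
  show ?thesis using pR cnt concl by (simp add: p_def W_def)
qed

lemma iter_bound:
  assumes R: "R \<subseteq> {1..k}" "R \<noteq> {}" and e: "0 \<le> \<epsilon>" "\<epsilon> \<le> (\<gamma>-1)/2" and B0: "0 \<le> Bnd"
    and Bb: "\<And>t m. t \<in> {1..k} \<Longrightarrow> N+1 \<le> m \<Longrightarrow>
       EE (cluster X cl t) m (\<lambda>W. if \<epsilon> * rad t < edist d (list_mean W) (mu t) then 1 else 0) \<le> Bnd"
  shows "measure_pmf.prob (sample_list (Sof R) (k*N+1)) (badset R) \<le> (if card R = 1 then 0 else real (card R) * Bnd)"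
proof -
  let ?S = "Sof R" and ?l = "k*N+1"
  have Sf: "finite ?S" by (rule Sof_fin)
  have Sn: "?S \<noteq> {}" by (rule Sof_ne[OF R])
  have fR: "finite R" using R finite_subset by blast
  have P: "measure_pmf.prob (sample_list ?S ?l) (badset R) = EE ?S ?l (\<lambda>Z. if Z \<in> badset R then 1 else 0)"
    by (rule prob_sample[OF Sf Sn])
  define far where "far t W = (if \<epsilon> * rad t < edist d (list_mean W) (mu t) then 1 else (0::real))" for t W
  define trm where "trm t Z = (if N+1 \<le> length (filter (\<lambda>x. cl x = t) Z) then far t (filter (\<lambda>x. cl x = t) Z) else 0)" for t Z
  show ?thesis
  proof (cases "card R = 1")
    case True
    have "EE ?S ?l (\<lambda>Z. if Z \<in> badset R then 1 else 0) = EE ?S ?l (\<lambda>_. 0)"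
    proof (rule Ex_cong)
      fix Z assume "length Z = ?l" "set Z \<subseteq> ?S"
      then have "Z \<notin> badset R" using good_pt[OF R _ _ e] True by blast
      then show "(if Z \<in> badset R then 1 else 0) = (0::real)" by simp
    qed
    then have e0: "EE ?S ?l (\<lambda>Z. if Z \<in> badset R then 1 else 0) = 0" using Ex_const[OF Sf Sn] by simp
    show ?thesis unfolding P e0 using True by simp
  next
    case False
    have "EE ?S ?l (\<lambda>Z. if Z \<in> badset R then 1 else 0) \<le> EE ?S ?l (\<lambda>Z. \<Sum>t\<in>R. trm t Z)"
    proof (rule Ex_mono)
      fix Z assume Z: "length Z = ?l" "set Z \<subseteq> ?S"
      have tn: "0 \<le> trm t Z" for t by (simp add: trm_def far_def)
      show "(if Z \<in> badset R then 1 else 0) \<le> (\<Sum>t\<in>R. trm t Z)"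
      proof (cases "Z \<in> badset R")
        case True
        from good_pt[OF R Z e] True
        have g: "tb Z \<in> R" "N+1 \<le> label_count cl Z (tb Z)"
          "\<epsilon> * rad (tb Z) < edist d (list_mean (filter (\<lambda>x. cl x = tb Z) Z)) (mu (tb Z))" by auto
        then have "trm (tb Z) Z = 1" by (simp add: trm_def far_def label_count_def)
        moreover have "trm (tb Z) Z \<le> (\<Sum>t\<in>R. trm t Z)"
          by (rule member_le_sum) (use g fR tn in auto)
        ultimately show ?thesis using True by simp
      next
        case False
        then show ?thesis by (simp add: sum_nonneg tn)
      qed
    qed
    also have "\<dots> = (\<Sum>t\<in>R. EE ?S ?l (trm t))" by (rule Ex_sum)
    also have "\<dots> \<le> (\<Sum>t\<in>R. Bnd)"
    proof (rule sum_mono)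
      fix t assume tR: "t \<in> R"
      then have tk: "t \<in> {1..k}" using R by auto
      have Cn: "cluster X cl t \<noteq> {}" using ne tk by blast
      have "EE ?S ?l (\<lambda>Z. if N+1 \<le> length (filter (\<lambda>x. cl x = t) Z) then far t (filter (\<lambda>x. cl x = t) Z) else 0) \<le> Bnd"
        by (rule label_bound[OF Sf Sof_cl[OF tR, symmetric] Cn _ B0])
           (use Bb[OF tk] in \<open>simp add: far_def\<close>)
      then show "EE ?S ?l (trm t) \<le> Bnd" by (simp add: trm_def)
    qed
    also have "\<dots> = real (card R) * Bnd" by simp
    finally show ?thesis using P False by simp
  qed
qed

lemma main_ind:
  assumes l1: "1 \<le> l" and q0: "0 \<le> q"
    and H: "\<And>R. R \<subseteq> {1..k} \<Longrightarrow> R \<noteq> {} \<Longrightarrow> measure_pmf.prob (sample_list (Sof R) l) (badset R) \<le> q"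
  shows "R \<subseteq> {1..k} \<Longrightarrow> card R = n \<Longrightarrow> 1 - real n * q \<le> pmf (run d cl tb l n (Sof R)) (Some (cluster X cl ` R))"
proof (induction n arbitrary: R)
  case 0
  then have "R = {}" using finite_subset[OF 0(1)] by auto
  then show ?case by simp
next
  case (Suc n)
  have fR: "finite R" using Suc.prems finite_subset by blast
  have Rne: "R \<noteq> {}" using Suc.prems by auto
  let ?S = "Sof R"
  have Sf: "finite ?S" by (rule Sof_fin)
  have Sn: "?S \<noteq> {}" by (rule Sof_ne[OF Suc.prems(1) Rne])
  define F where "F Z = (case iteration d cl tb ?S Z of None \<Rightarrow> return_pmf None
          | Some C' \<Rightarrow> map_pmf (map_option (insert C')) (run d cl tb l n (?S - C')))" for Z
  have "pmf (run d cl tb l (Suc n) ?S) (Some (cluster X cl ` R)) = pmf (bind_pmf (sample_list ?S l) F) (Some (cluster X cl ` R))"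
    unfolding F_def using Sn by simp
  also have "\<dots> = EE ?S l (\<lambda>Z. pmf (F Z) (Some (cluster X cl ` R)))" by (rule pmf_bind_sample[OF Sf Sn])
  also have "\<dots> \<ge> EE ?S l (\<lambda>Z. (1 - real n * q) - (if Z \<in> badset R then 1 else 0))"
  proof (rule Ex_mono)
    fix Z assume Z: "length Z = l" "set Z \<subseteq> ?S"
    show "(1 - real n * q) - (if Z \<in> badset R then 1 else 0) \<le> pmf (F Z) (Some (cluster X cl ` R))"
    proof (cases "Z \<in> badset R")
      case True
      have a: "0 \<le> real n * q" using q0 by simp
      have b: "0 \<le> pmf (F Z) (Some (cluster X cl ` R))" by (rule pmf_nonneg)
      show ?thesis using True a b by (simp only: if_True)
    next
      case False
      define p where "p = tb Z"
      have pR: "p \<in> R" and it: "iteration d cl tb ?S Z = Some (cluster X cl p)"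
        using False by (auto simp: badset_def p_def)
      have FZ: "F Z = map_pmf (map_option (insert (cluster X cl p))) (run d cl tb l n (Sof (R - {p})))"
        by (simp add: F_def it Sof_diff[OF pR])
      have ins: "map_option (insert (cluster X cl p)) (Some (cluster X cl ` (R - {p}))) = Some (cluster X cl ` R)"
        using pR by auto
      have "1 - real n * q \<le> pmf (run d cl tb l n (Sof (R - {p}))) (Some (cluster X cl ` (R - {p})))"
        by (rule Suc.IH) (use Suc.prems pR fR in auto)
      also have "\<dots> \<le> pmf (F Z) (Some (cluster X cl ` R))"
        unfolding FZ by (subst ins[symmetric]) (rule pmf_map_ge)
      finally show ?thesis using False by simp
    qed
  qed
  also have "EE ?S l (\<lambda>Z. (1 - real n * q) - (if Z \<in> badset R then 1 else 0))
        = (1 - real n * q) - measure_pmf.prob (sample_list ?S l) (badset R)"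
    by (simp add: Ex_diff Ex_const[OF Sf Sn] prob_sample[OF Sf Sn])
  finally show ?case using H[OF Suc.prems(1) Rne] by (simp add: algebra_simps)
qed

end


lemma ln2_ge: "1/4 \<le> ln (2::real)"
proof -
  have "norm (exp (1/4::real)) \<le> 2" by (rule exp_bound_half) simp
  then have "exp (1/4::real) \<le> 2" by simp
  then show ?thesis by (subst ln_ge_iff) auto
qed

lemma numeric:
  fixes k N :: nat and \<delta> \<gamma> :: real
  assumes k: "2 \<le> k" and d: "0 < \<delta>" "\<delta> < 1" and g: "1 < \<gamma>" "\<gamma> < 3"
    and N: "256 * (ln (real k) + ln (1/\<delta>)) / (\<gamma>-1)^4 \<le> real N"
  shows "real k * exp (1/2 - real (N+1) * ((\<gamma>-1)/2)^2/4) \<le> \<delta> / real k"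
proof -
  define G where "G = \<gamma> - 1"
  define L where "L = ln (real k) + ln (1/\<delta>)"
  have G: "0 < G" "G < 2" using g by (auto simp: G_def)
  have lk: "1/4 \<le> ln (real k)"
  proof -
    have "ln 2 \<le> ln (real k)" using k by simp
    then show ?thesis using ln2_ge by simp
  qed
  have ld: "0 \<le> ln (1/\<delta>)" using d by simp
  have L0: "0 \<le> L" using lk ld by (simp add: L_def)
  have "G^2 \<le> 2^2" by (rule power_mono) (use G in auto)
  then have G2: "G^2 \<le> 4" by simp
  have G2p: "0 < G^2" using G by simp
  have "real (N+1) * ((\<gamma>-1)/2)^2/4 \<ge> real N * G^2 / 16"
    by (simp add: G_def power_divide field_simps)
  moreover have "real N * G^2 / 16 \<ge> (256 * L / G^4) * G^2 / 16"
    using N G2p by (intro divide_right_mono mult_right_mono) (auto simp: L_def G_def)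
  moreover have "(256 * L / G^4) * G^2 / 16 = 16 * L / G^2"
    using G by (simp add: field_simps power2_eq_square power4_eq_xxxx)
  moreover have "16 * L / G^2 \<ge> 4 * L"
  proof -
    have "4 * L * G^2 \<le> 4 * L * 4" using G2 L0 by (intro mult_left_mono) auto
    then show ?thesis using G2p by (simp add: field_simps)
  qed
  ultimately have X: "real (N+1) * ((\<gamma>-1)/2)^2/4 \<ge> 4 * L" by linarith
  have "1/2 - real (N+1) * ((\<gamma>-1)/2)^2/4 \<le> -(2 * ln (real k) + ln (1/\<delta>))"
    using X lk ld by (simp add: L_def)
  then have "exp (1/2 - real (N+1) * ((\<gamma>-1)/2)^2/4) \<le> exp (-(2 * ln (real k) + ln (1/\<delta>)))"
    by simp
  also have "exp (-(2 * ln (real k) + ln (1/\<delta>))) = \<delta> / (real k)^2"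
  proof -
    have "exp (2 * ln (real k) + ln (1/\<delta>)) = (real k)^2 / \<delta>"
    proof -
      have kp: "0 < real k" using k by simp
      have "exp (2 * ln (real k)) = exp (ln (real k)) * exp (ln (real k))" by (simp flip: exp_add)
      also have "\<dots> = (real k)^2" using kp by (simp add: power2_eq_square)
      finally have "exp (2 * ln (real k)) = (real k)^2" .
      then show ?thesis using d by (simp add: exp_add)
    qed
    then show ?thesis by (simp only: exp_minus) simp
  qed
  finally have "real k * exp (1/2 - real (N+1) * ((\<gamma>-1)/2)^2/4) \<le> real k * (\<delta> / (real k)^2)"
    using k by (intro mult_left_mono) auto
  also have "\<dots> = \<delta> / real k" using k by (simp add: power2_eq_square)
  finally show ?thesis .
qed


theorem theorem1:
  "\<exists>\<beta>>0. \<forall>(d::nat) (X::point set) (k::nat) (cl::point \<Rightarrow> nat) (tb::point list \<Rightarrow> nat)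
      (\<gamma>::real) (\<delta>::real).
     finite X \<and> X \<subseteq> Rd d
     \<and> (\<forall>x\<in>X. cl x \<in> {1..k})
     \<and> (\<forall>i\<in>{1..k}. cluster X cl i \<noteq> {})
     \<and> center_based d X cl k (\<lambda>i. center_of_mass (cluster X cl i))
     \<and> margin_property d \<gamma> X cl k (\<lambda>i. center_of_mass (cluster X cl i))
     \<and> 0 < \<delta> \<and> \<delta> < 1 \<and> 1 < \<gamma>
     \<and> (\<forall>Z. Z \<noteq> [] \<longrightarrow> tb Z \<in> argmax_labels cl Z)
     \<longrightarrow> pmf (algorithm \<beta> d X cl tb k \<delta> \<gamma>) (Some (clustering X cl k)) \<ge> 1 - \<delta>"
proof (rule exI[of _ 256], intro conjI allI impI)
  show "(0::real) < 256" by simp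
  fix d :: nat and X :: "point set" and k :: nat and cl :: "point \<Rightarrow> nat"
    and tb :: "point list \<Rightarrow> nat" and \<gamma> \<delta> :: real
  assume A: "finite X \<and> X \<subseteq> Rd d
     \<and> (\<forall>x\<in>X. cl x \<in> {1..k})
     \<and> (\<forall>i\<in>{1..k}. cluster X cl i \<noteq> {})
     \<and> center_based d X cl k (\<lambda>i. center_of_mass (cluster X cl i))
     \<and> margin_property d \<gamma> X cl k (\<lambda>i. center_of_mass (cluster X cl i))
     \<and> 0 < \<delta> \<and> \<delta> < 1 \<and> 1 < \<gamma>
     \<and> (\<forall>Z. Z \<noteq> [] \<longrightarrow> tb Z \<in> argmax_labels cl Z)"
  then have fin: "finite X" and lab: "\<forall>x\<in>X. cl x \<in> {1..k}"
    and ne: "\<forall>i\<in>{1..k}. cluster X cl i \<noteq> {}"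
    and marg: "margin_property d \<gamma> X cl k (\<lambda>i. center_of_mass (cluster X cl i))"
    and d0: "0 < \<delta>" and d1: "\<delta> < 1" and g1: "1 < \<gamma>"
    and tbA: "\<forall>Z. Z \<noteq> [] \<longrightarrow> tb Z \<in> argmax_labels cl Z" by auto
  note ctx = fin lab ne marg g1 tbA
  show "1 - \<delta> \<le> pmf (algorithm 256 d X cl tb k \<delta> \<gamma>) (Some (clustering X cl k))"
  proof (cases "k = 0")
    case True
    then have "X = {}" using lab by auto
    moreover have "clustering X cl k = {}" using True by (simp add: clustering_def)
    ultimately show ?thesis using True d0 by (simp add: algorithm_def)
  next
    case False
    then have k1: "1 \<le> k" by simp
    define \<eta> where "\<eta> = eta 256 k \<delta> \<gamma>"
    define N where "N = nat \<lceil>\<eta>\<rceil>"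
    define l where "l = k * N + 1"
    define \<epsilon> where "\<epsilon> = min 1 ((\<gamma>-1)/2)"
    define Bnd where "Bnd = (if 1 \<le> \<epsilon> then 0 else exp (1/2 - real (N+1) * \<epsilon>^2/4))"
    define q where "q = \<delta> / real k"
    have e0: "0 < \<epsilon>" "\<epsilon> \<le> (\<gamma>-1)/2" using g1 by (auto simp: \<epsilon>_def min_def)
    have B0: "0 \<le> Bnd" by (simp add: Bnd_def)
    have eta0: "0 \<le> \<eta>"
    proof -
      have "0 \<le> ln (real k)" using k1 by simp
      moreover have "0 \<le> ln (1/\<delta>)" using d0 d1 by simp
      ultimately show ?thesis using g1 by (simp add: \<eta>_def eta_def)
    qed
    have Neta: "\<eta> \<le> real N" using eta0 by (simp add: N_def)
    have Bb: "EE (cluster X cl t) m (\<lambda>W. if \<epsilon> * rad d X cl t < edist d (list_mean W) (mu X cl t) then 1 else 0) \<le> Bnd"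
      if t: "t \<in> {1..k}" and m: "N+1 \<le> m" for t m
    proof -
      have "EE (cluster X cl t) m (\<lambda>W. if \<epsilon> * rad d X cl t < edist d (list_mean W) (mu X cl t) then 1 else 0)
          \<le> (if 1 \<le> \<epsilon> then 0 else exp (1/2 - real m * \<epsilon>^2/4))"
        by (rule far_bound[OF ctx t _ e0(1)]) (use m in simp)
      also have "\<dots> \<le> Bnd"
      proof -
        have "real (N+1) * \<epsilon>^2/4 \<le> real m * \<epsilon>^2/4"
          using m by (intro divide_right_mono mult_right_mono) auto
        then show ?thesis by (simp add: Bnd_def)
      qed
      finally show ?thesis .
    qed
    have H: "measure_pmf.prob (sample_list (Sof X cl R) l) (badset d X cl tb R) \<le> q"
      if R: "R \<subseteq> {1..k}" "R \<noteq> {}" for R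
    proof -
      have "measure_pmf.prob (sample_list (Sof X cl R) l) (badset d X cl tb R)
           \<le> (if card R = 1 then 0 else real (card R) * Bnd)"
        unfolding l_def by (rule iter_bound[OF ctx R less_imp_le[OF e0(1)] e0(2) B0 Bb])
      also have "\<dots> \<le> q"
      proof (cases "card R = 1 \<or> 1 \<le> \<epsilon>")
        case True
        then show ?thesis using d0 by (auto simp: q_def Bnd_def)
      next
        case False
        have cR: "card R \<le> k" using card_mono[OF _ R(1)] by simp
        have "card R \<noteq> 0" using R finite_subset[OF R(1)] by auto
        then have "2 \<le> card R" using False by linarith
        then have k2: "2 \<le> k" using cR by simp
        have eg: "\<epsilon> = (\<gamma>-1)/2" and g3: "\<gamma> < 3" using False by (auto simp: \<epsilon>_def)
        have "real (card R) * Bnd \<le> real k * Bnd" using cR B0 by (intro mult_right_mono) auto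
        also have "\<dots> = real k * exp (1/2 - real (N+1) * ((\<gamma>-1)/2)^2/4)"
          using False unfolding Bnd_def eg by simp
        also have "\<dots> \<le> \<delta> / real k"
          by (rule numeric[OF k2 d0 d1 g1 g3]) (use Neta in \<open>simp add: \<eta>_def eta_def\<close>)
        finally show ?thesis using False by (simp add: q_def)
      qed
      finally show ?thesis .
    qed
    have q0: "0 \<le> q" using d0 by (simp add: q_def)
    have "1 - real k * q \<le> pmf (run d cl tb l k (Sof X cl {1..k})) (Some (cluster X cl ` {1..k}))"
      by (rule main_ind[OF ctx _ q0 H]) (auto simp: l_def)
    moreover have "Sof X cl {1..k} = X" using lab by (auto simp: Sof_def[OF ctx])
    moreover have "cluster X cl ` {1..k} = clustering X cl k" by (auto simp: clustering_def)
    moreover have "real k * q = \<delta>" using k1 by (simp add: q_def)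
    ultimately show ?thesis by (simp add: algorithm_def l_def N_def \<eta>_def)
  qed
qed


end
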